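(* $\mathrm{1DPD}\not\subseteq\mathrm{1N}$.
   Context: A family of promise decision problems over a fixed alphabet $\Sigma$ is $\mathcal{L}=\{(L^{(+)}_n,L^{(-)}_n)\}_{n\in\mathbb{N}}$ with $L^{(+)}_n,L^{(-)}_n\subseteq\Sigma^*$ disjoint; a family of machines $\{M_n\}_n$ solves it if each $M_n$ accepts every $x\in L^{(+)}_n$ and rejects every $x\in L^{(-)}_n$ (no uniformity is required). A 1dpda is a one-way deterministic pushdown automaton with state set $Q$, endmarked input, stack alphabet $\Gamma$ and push size $e$ (each move replaces the top stack symbol by a string in $\Gamma^{\le e}$), with accepting and rejecting halting states; its stack-state complexity is $|Q|+|\Gamma^{\le e}|$. $\mathrm{1DPD}$ is the class of families of promise problems solvable by families of 1dpda's whose stack-state complexity is bounded by a fixed polynomial in $n$. $\mathrm{1N}$ is the class of families of promise problems solvable by families of one-way nondeterministic finite automata whose number of states is bounded by a fixed polynomial in $n$. *)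

theory Defs
  imports Main
begin

datatype 'a tsym = Cent | Sym 'a | Dollar

definition tape :: "'a list \<Rightarrow> 'a tsym list" where
  "tape x = Cent # map Sym x @ [Dollar]"

text \<open>The transition function
  maps (state, tape symbol or None for a lambda-move, top stack symbol) to
  (new state, string replacing the top stack symbol). The top of the stack is
  the head of the list.\<close>
record dpda =
  dQ :: "nat set"
  dGam :: "nat set"
  dpush :: nat
  dq0 :: nat
  dZ0 :: nat
  dacc :: nat
  drej :: nat
  ddelta :: "nat \<Rightarrow> nat tsym option \<Rightarrow> nat \<Rightarrow> (nat \<times> nat list) option"

definition wf_dpda :: "dpda \<Rightarrow> bool" where
  "wf_dpda M \<longleftrightarrow>
     finite (dQ M) \<and> finite (dGam M) \<and>
     dq0 M \<in> dQ M \<and> dacc M \<in> dQ M \<and> drej M \<in> dQ M \<and> dacc M \<noteq> drej M \<and>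
     dZ0 M \<in> dGam M \<and>
     (\<forall>q s z q' w. ddelta M q s z = Some (q', w) \<longrightarrow>
        q \<in> dQ M \<and> q \<noteq> dacc M \<and> q \<noteq> drej M \<and> z \<in> dGam M \<and>
        q' \<in> dQ M \<and> set w \<subseteq> dGam M \<and> length w \<le> dpush M) \<and>
     (\<forall>q z. ddelta M q None z \<noteq> None \<longrightarrow> (\<forall>a. ddelta M q (Some a) z = None))"

text \<open>Configurations: (state, unread part of the endmarked input, stack).\<close>
inductive dstep :: "dpda \<Rightarrow> nat \<times> nat tsym list \<times> nat list \<Rightarrow> nat \<times> nat tsym list \<times> nat list \<Rightarrow> bool"
  for M where
  read: "ddelta M q (Some a) z = Some (q', w) \<Longrightarrow> dstep M (q, a # u, z # g) (q', u, w @ g)"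
| lam: "ddelta M q None z = Some (q', w) \<Longrightarrow> dstep M (q, u, z # g) (q', u, w @ g)"

definition dpda_accepts :: "dpda \<Rightarrow> nat list \<Rightarrow> bool" where
  "dpda_accepts M x \<longleftrightarrow>
     (\<exists>u g. (dstep M)\<^sup>*\<^sup>* (dq0 M, tape x, [dZ0 M]) (dacc M, u, g))"

definition dpda_rejects :: "dpda \<Rightarrow> nat list \<Rightarrow> bool" where
  "dpda_rejects M x \<longleftrightarrow>
     (\<exists>u g. (dstep M)\<^sup>*\<^sup>* (dq0 M, tape x, [dZ0 M]) (drej M, u, g))"

definition stack_state_complexity :: "dpda \<Rightarrow> nat" where
  "stack_state_complexity M =
     card (dQ M) + card {w. set w \<subseteq> dGam M \<and> length w \<le> dpush M}"

record nfa =
  nQ :: "nat set"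
  nq0 :: "nat"
  nF :: "nat set"
  ndelta :: "nat \<Rightarrow> nat tsym \<Rightarrow> nat set"

definition wf_nfa :: "nfa \<Rightarrow> bool" where
  "wf_nfa M \<longleftrightarrow> finite (nQ M) \<and> nq0 M \<in> nQ M \<and> nF M \<subseteq> nQ M \<and>
     (\<forall>q a. ndelta M q a \<subseteq> nQ M)"

fun nreach :: "nfa \<Rightarrow> nat \<Rightarrow> nat tsym list \<Rightarrow> nat set" where
  "nreach M q [] = {q}"
| "nreach M q (a # w) = (\<Union>q'\<in>ndelta M q a. nreach M q' w)"

definition nfa_accepts :: "nfa \<Rightarrow> nat list \<Rightarrow> bool" where
  "nfa_accepts M x \<longleftrightarrow> nreach M (nq0 M) (tape x) \<inter> nF M \<noteq> {}"

type_synonym promise_family = "nat \<Rightarrow> nat list set \<times> nat list set"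

definition promise_family_over :: "nat set \<Rightarrow> promise_family \<Rightarrow> bool" where
  "promise_family_over \<Sigma> L \<longleftrightarrow>
     (\<forall>n. fst (L n) \<subseteq> lists \<Sigma> \<and> snd (L n) \<subseteq> lists \<Sigma> \<and> fst (L n) \<inter> snd (L n) = {})"

definition in_1DPD :: "promise_family \<Rightarrow> bool" where
  "in_1DPD L \<longleftrightarrow> (\<exists>c k::nat. \<forall>n. \<exists>M. wf_dpda M \<and>
      stack_state_complexity M \<le> c * (n + 1) ^ k \<and>
      (\<forall>x\<in>fst (L n). dpda_accepts M x) \<and> (\<forall>x\<in>snd (L n). dpda_rejects M x))"

definition in_1N :: "promise_family \<Rightarrow> bool" where
  "in_1N L \<longleftrightarrow> (\<exists>c k::nat. \<forall>n. \<exists>M. wf_nfa M \<and>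
      card (nQ M) \<le> c * (n + 1) ^ k \<and>
      (\<forall>x\<in>fst (L n). nfa_accepts M x) \<and> (\<forall>x\<in>snd (L n). \<not> nfa_accepts M x))"

end

theory Submission
  imports Defs
begin

definition Mdel :: "nat \<Rightarrow> nat tsym option \<Rightarrow> nat \<Rightarrow> (nat \<times> nat list) option" where
  "Mdel q s z = (if q = 0 \<and> z \<le> 1 then
     (case s of Some Cent \<Rightarrow> Some (0, [z])
      | Some (Sym a) \<Rightarrow> (if a = 0 then Some (0, [1, z])
                         else if a = 1 then (if z = 1 then Some (0, []) else Some (2, [0]))
                         else None)
      | Some Dollar \<Rightarrow> Some (1, [z])
      | None \<Rightarrow> None) else None)"

definition MM :: dpda where
  "MM = \<lparr>dQ = {0,1,2}, dGam = {0,1}, dpush = 2, dq0 = 0, dZ0 = 0, dacc = 1, drej = 2,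
         ddelta = Mdel\<rparr>"

definition LL :: promise_family where
  "LL n = ({replicate m 0 @ replicate m 1 | m. True},
           {replicate m 0 @ replicate k 1 | m k. m < k})"

lemma Mdel_some: assumes that: "Mdel q s z = Some (q', w)" shows "
   q = 0 \<and> z \<le> 1 \<and> q' \<le> 2 \<and> set w \<subseteq> {0,1} \<and> length w \<le> 2"
proof (cases s)
  case None then show ?thesis using that by (simp add: Mdel_def split: if_splits)
next
  case (Some t) then show ?thesis using that by (cases t) (auto simp: Mdel_def split: if_splits)
qed

lemma MM_wf: "wf_dpda MM"
proof -
  have "\<forall>q s z q' w. Mdel q s z = Some (q', w) \<longrightarrow>
        q \<in> {0,1,2} \<and> q \<noteq> 1 \<and> q \<noteq> 2 \<and> z \<in> {0,1} \<and>
        q' \<in> {0,1,2} \<and> set w \<subseteq> {0,1} \<and> length w \<le> 2"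
  proof (intro allI impI)
    fix q s z q' w assume "Mdel q s z = Some (q', w)"
    from Mdel_some[OF this] show "q \<in> {0,1,2} \<and> q \<noteq> 1 \<and> q \<noteq> 2 \<and> z \<in> {0,1} \<and>
        q' \<in> {0,1,2} \<and> set w \<subseteq> {0,1} \<and> length w \<le> 2" by auto
  qed
  moreover have "\<forall>q z. Mdel q None z = None" by (simp add: Mdel_def)
  ultimately show ?thesis unfolding wf_dpda_def MM_def by simp blast
qed

lemma stepI: "Mdel q (Some a) z = Some (q', w) \<Longrightarrow> x = a # u \<Longrightarrow> s = z # g \<Longrightarrow> g2 = w @ g \<Longrightarrow>
   dstep MM (q, x, s) (q', u, g2)"
  using dstep.read[of MM q a z q' w u g] by (simp add: MM_def)

lemma MM_cplx: "stack_state_complexity MM \<le> 12"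
proof -
  have "card {w. set w \<subseteq> {0::nat,1} \<and> length w \<le> 2} = (\<Sum>i\<le>2. card {0::nat,1}^i)"
    by (rule card_lists_length_le) simp
  also have "\<dots> = 7" by (simp add: numeral_2_eq_2)
  finally show ?thesis unfolding stack_state_complexity_def MM_def by simp
qed

lemma runA: "g \<noteq> [] \<Longrightarrow> hd g \<le> 1 \<Longrightarrow>
  (dstep MM)\<^sup>*\<^sup>* (0, map Sym (replicate j 0) @ u, g) (0, u, replicate j 1 @ g)"
proof (induction j arbitrary: g)
  case 0 then show ?case by simp
next
  case (Suc j)
  obtain z g' where g: "g = z # g'" using Suc.prems by (cases g) auto
  have "dstep MM (0, map Sym (replicate (Suc j) 0) @ u, g) (0, map Sym (replicate j 0) @ u, [1, z] @ g')"
    by (rule stepI[where a="Sym 0" and z=z and g=g']) (use Suc.prems g in \<open>simp_all add: Mdel_def\<close>)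
  moreover have "(dstep MM)\<^sup>*\<^sup>* (0, map Sym (replicate j 0) @ u, 1 # g) (0, u, replicate j 1 @ 1 # g)"
    using Suc.IH by simp
  ultimately show ?case using g by (simp add: replicate_app_Cons_same)
qed

lemma runB: "(dstep MM)\<^sup>*\<^sup>* (0, map Sym (replicate j 1) @ u, replicate j 1 @ g) (0, u, g)"
proof (induction j)
  case 0 then show ?case by simp
next
  case (Suc j)
  have "dstep MM (0, map Sym (replicate (Suc j) 1) @ u, replicate (Suc j) 1 @ g)
          (0, map Sym (replicate j 1) @ u, [] @ replicate j 1 @ g)"
    by (rule stepI[where a="Sym 1" and z=1 and g="replicate j 1 @ g"]) (simp_all add: Mdel_def)
  then show ?case using Suc.IH by simp
qed

lemma MM_pos: "dpda_accepts MM (replicate m 0 @ replicate m 1)"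
proof -
  have s1: "dstep MM (0, tape (replicate m 0 @ replicate m 1), [0])
     (0, map Sym (replicate m 0) @ (map Sym (replicate m 1) @ [Dollar]), [0] @ [])"
    by (rule stepI[where a=Cent and z=0 and g="[]"]) (simp_all add: Mdel_def tape_def)
  have s2: "(dstep MM)\<^sup>*\<^sup>* (0, map Sym (replicate m 0) @ (map Sym (replicate m 1) @ [Dollar]), [0])
      (0, map Sym (replicate m 1) @ [Dollar], replicate m 1 @ [0])"
    by (rule runA) auto
  have s3: "(dstep MM)\<^sup>*\<^sup>* (0, map Sym (replicate m 1) @ [Dollar], replicate m 1 @ [0]) (0, [Dollar], [0])"
    by (rule runB)
  have s4: "dstep MM (0, [Dollar], [0]) (1, [], [0] @ [])"
    by (rule stepI[where a=Dollar and z=0 and g="[]"]) (simp_all add: Mdel_def)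
  show ?thesis unfolding dpda_accepts_def
    using s1 s2 s3 s4
    by (simp add: MM_def) (meson converse_rtranclp_into_rtranclp rtranclp.rtrancl_into_rtrancl rtranclp_trans)
qed

lemma MM_neg: "m < k \<Longrightarrow> dpda_rejects MM (replicate m 0 @ replicate k 1)"
proof -
  assume "m < k"
  then obtain r where k: "k = m + Suc r" by (metis less_imp_Suc_add add_Suc_right)
  let ?v = "map Sym (1 # replicate r 1) @ [Dollar]"
  have t: "tape (replicate m 0 @ replicate k 1) = Cent # map Sym (replicate m 0) @ map Sym (replicate m 1) @ ?v"
    by (simp add: tape_def k replicate_add replicate_app_Cons_same)
  have s1: "dstep MM (0, tape (replicate m 0 @ replicate k 1), [0])
     (0, map Sym (replicate m 0) @ (map Sym (replicate m 1) @ ?v), [0] @ [])"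
    unfolding t by (rule stepI[where a=Cent and z=0 and g="[]"]) (simp_all add: Mdel_def)
  have s2: "(dstep MM)\<^sup>*\<^sup>* (0, map Sym (replicate m 0) @ (map Sym (replicate m 1) @ ?v), [0])
      (0, map Sym (replicate m 1) @ ?v, replicate m 1 @ [0])"
    by (rule runA) auto
  have s3: "(dstep MM)\<^sup>*\<^sup>* (0, map Sym (replicate m 1) @ ?v, replicate m 1 @ [0]) (0, ?v, [0])"
    by (rule runB)
  have s4: "dstep MM (0, ?v, [0]) (2, map Sym (replicate r 1) @ [Dollar], [0] @ [])"
    by (rule stepI[where a="Sym 1" and z=0 and g="[]"]) (simp_all add: Mdel_def)
  show ?thesis unfolding dpda_rejects_def
    using s1 s2 s3 s4
    by (simp add: MM_def) (meson converse_rtranclp_into_rtranclp rtranclp.rtrancl_into_rtrancl rtranclp_trans)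
qed

lemma nreach_app: "nreach M q (u @ v) = (\<Union>q'\<in>nreach M q u. nreach M q' v)"
  by (induction u arbitrary: q) auto

lemma nreach_sub: "wf_nfa M \<Longrightarrow> q \<in> nQ M \<Longrightarrow> nreach M q w \<subseteq> nQ M"
proof (induction w arbitrary: q)
  case Nil then show ?case by simp
next
  case (Cons a w)
  have "ndelta M q a \<subseteq> nQ M" using Cons.prems(1) unfolding wf_nfa_def by blast
  then show ?case using Cons.IH[OF Cons.prems(1)] by auto
qed

lemma no_nfa:
  assumes wf: "wf_nfa M"
    and pos: "\<And>m. nfa_accepts M (replicate m 0 @ replicate m 1)"
    and neg: "\<And>m k. m < k \<Longrightarrow> \<not> nfa_accepts M (replicate m 0 @ replicate k 1)"
  shows False
proof -
  define A where "A m = Cent # map Sym (replicate m (0::nat))" for m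
  define B where "B k = map Sym (replicate k (1::nat)) @ [Dollar]" for k
  have tp: "tape (replicate m 0 @ replicate k 1) = A m @ B k" for m k
    by (simp add: tape_def A_def B_def)
  define P where "P m q \<longleftrightarrow> q \<in> nreach M (nq0 M) (A m) \<and> nreach M q (B m) \<inter> nF M \<noteq> {}" for m q
  have ex: "\<exists>q. P m q" for m
  proof -
    have "(\<Union>q'\<in>nreach M (nq0 M) (A m). nreach M q' (B m)) \<inter> nF M \<noteq> {}"
      using pos[of m] unfolding nfa_accepts_def tp nreach_app .
    then obtain q where "q \<in> nreach M (nq0 M) (A m)" "nreach M q (B m) \<inter> nF M \<noteq> {}"
      by auto
    then show ?thesis unfolding P_def by auto
  qed
  define f where "f m = (SOME q. P m q)" for m
  have Pf: "P m (f m)" for m unfolding f_def using someI_ex[OF ex] .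
  let ?N = "card (nQ M)"
  have fin: "finite (nQ M)" and q0: "nq0 M \<in> nQ M" using wf unfolding wf_nfa_def by auto
  have fQ: "f ` {0..?N} \<subseteq> nQ M"
  proof (rule image_subsetI)
    fix m
    have "f m \<in> nreach M (nq0 M) (A m)" using Pf[of m] unfolding P_def by simp
    then show "f m \<in> nQ M" using nreach_sub[OF wf q0] by blast
  qed
  have "\<not> inj_on f {0..?N}"
  proof
    assume "inj_on f {0..?N}"
    then have "card (f ` {0..?N}) = Suc ?N" by (simp add: card_image)
    moreover have "card (f ` {0..?N}) \<le> ?N" using card_mono[OF fin fQ] .
    ultimately show False by simp
  qed
  then obtain m m' where "m \<noteq> m'" "f m = f m'" unfolding inj_on_def by blast
  then obtain a b where ab: "a < b" "f a = f b"
  proof (cases "m < m'")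
    case True then show ?thesis using that \<open>f m = f m'\<close> by blast
  next
    case False then have "m' < m" using \<open>m \<noteq> m'\<close> by simp
    then show ?thesis using that \<open>f m = f m'\<close> by simp
  qed
  have "nfa_accepts M (replicate a 0 @ replicate b 1)"
  proof -
    have 1: "f a \<in> nreach M (nq0 M) (A a)" using Pf[of a] unfolding P_def by simp
    have 2: "nreach M (f a) (B b) \<inter> nF M \<noteq> {}" using Pf[of b] ab(2) unfolding P_def by simp
    have "nreach M (f a) (B b) \<subseteq> (\<Union>q'\<in>nreach M (nq0 M) (A a). nreach M q' (B b))"
      using 1 by blast
    then show ?thesis using 2 unfolding nfa_accepts_def tp nreach_app by blast
  qed
  then show False using neg[OF ab(1)] by simp
qed

lemma disj: "m < k \<Longrightarrow> replicate j (0::nat) @ replicate j 1 \<noteq> replicate m 0 @ replicate k 1"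
proof
  assume "m < k" and e: "replicate j (0::nat) @ replicate j 1 = replicate m 0 @ replicate k 1"
  have "length (filter (\<lambda>x. x = 0) (replicate j (0::nat) @ replicate j 1)) =
        length (filter (\<lambda>x. x = 0) (replicate m (0::nat) @ replicate k 1))" using e by simp
  moreover have "length (filter (\<lambda>x. x = 1) (replicate j (0::nat) @ replicate j 1)) =
        length (filter (\<lambda>x. x = 1) (replicate m (0::nat) @ replicate k 1))" using e by simp
  ultimately show False using \<open>m < k\<close> by (simp add: filter_replicate)
qed

theorem proposition5p1:
  shows "\<exists>(\<Sigma>::nat set) L. finite \<Sigma> \<and> \<Sigma> \<noteq> {} \<and> promise_family_over \<Sigma> L \<and>
           in_1DPD L \<and> \<not> in_1N L"
proof (intro exI conjI)
  show "finite {0::nat,1}" by simp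
  show "{0::nat,1} \<noteq> {}" by simp
  show "promise_family_over {0,1} LL"
    unfolding promise_family_over_def LL_def using disj by auto
  show "in_1DPD LL"
    unfolding in_1DPD_def
    apply (rule exI[of _ 12], rule exI[of _ 0])
    using MM_wf MM_cplx MM_pos MM_neg unfolding LL_def by auto
  show "\<not> in_1N LL"
  proof
    assume "in_1N LL"
    then obtain M where "wf_nfa M" "\<forall>x\<in>fst (LL 0). nfa_accepts M x"
        "\<forall>x\<in>snd (LL 0). \<not> nfa_accepts M x"
      unfolding in_1N_def by blast
    then show False using no_nfa[of M] unfolding LL_def by auto
  qed
qed

end
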